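(* For $t\in\{0,1\}$ and $x\in\mathcal X$, $\Pr(Y^*=1\mid T^*=t,X^*=x)=\frac{r(x,p_0)\Pi(t\mid 1,x)}{\Pi(t\mid 0,x)+r(x,p)\{\Pi(t\mid 1,x)-\Pi(t\mid 0,x)\}}$, where $p=p_0$ under Design 1 and $p=0$ under Design 2.
   Context: Population variables: $Y^*\in\{0,1\}$, $T^*\in\{0,1\}$, covariate vector $X^*$; $p_0:=\Pr(Y^*=1)$. The observed vector $(Y,T,X)$ arises from Bernoulli sampling: $Y\in\{0,1\}$ is drawn with known probability $h_0:=\Pr(Y=1)\in(0,1)$, and given $Y=y$, $(T,X)$ is drawn from a distribution $\mathcal P_y$. Densities (or mass functions) are denoted by $f$. Design 1 (case-control): for all $t\in\{0,1\}$, $x\in\mathcal X$, $y\in\{0,1\}$, $f_{X|Y}(x\mid y)=f_{X^*|Y^*}(x\mid y)$ and $\Pr(T=t\mid X=x,Y=y)=\Pr(T^*=t\mid X^*=x,Y^*=y)$. Design 2 (case-population): for all $t,x$, $f_{X|Y}(x\mid 0)=f_{X^*}(x)$, $\Pr(T=t\mid X=x,Y=0)=\Pr(T^*=t\mid X^*=x)$, $f_{X|Y}(x\mid 1)=f_{X^*|Y^*}(x\mid 1)$, $\Pr(T=t\mid X=x,Y=1)=\Pr(T^*=t\mid X^*=x,Y^*=1)$. Standing common support assumption: the support of $X^*$ and that of $X$ given $Y=y$ for $y=0,1$ coincide; call it $\mathcal X$. Let $\Pi(t\mid y,x):=\Pr(T=t\mid Y=y,X=x)$, assumed nonzero for all $t,y$.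 For $p\in[0,1]$, under Design 1, $r(x,p):=\frac{p(1-h_0)\Pr(Y=1\mid X=x)}{p(1-h_0)\Pr(Y=1\mid X=x)+h_0(1-p)\Pr(Y=0\mid X=x)}$, and under Design 2, $r(x,p):=\frac{p(1-h_0)}{h_0}\frac{\Pr(Y=1\mid X=x)}{\Pr(Y=0\mid X=x)}$. *)

theory Defs
  imports "HOL-Analysis.Analysis"
begin

(* Conventions: the binary values 0/1 are encoded as False/True.
   X-values live in a measure space M (counting measure for discrete X,
   Lebesgue for continuous X); all densities are w.r.t. counting measure on
   {0,1} (for Y, T) times M (for X).

   Population: joint density g y t x of (Ystar, Tstar, Xstar).
   Observed:   Y ~ Bernoulli(h0); given Y = y, (T,X) ~ P_y with density k y t x. *)

datatype design = CaseControl | CasePopulation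

definition is_density :: "'x measure \<Rightarrow> (bool \<Rightarrow> 'x \<Rightarrow> real) \<Rightarrow> bool" where
  "is_density M d \<longleftrightarrow>
     (\<forall>t. \<forall>x\<in>space M. 0 \<le> d t x) \<and> (\<forall>t. integrable M (d t)) \<and>
     (\<integral>x. d False x \<partial>M) + (\<integral>x. d True x \<partial>M) = 1"

definition pop_density :: "'x measure \<Rightarrow> (bool \<Rightarrow> bool \<Rightarrow> 'x \<Rightarrow> real) \<Rightarrow> bool" where
  "pop_density M g \<longleftrightarrow>
     (\<forall>y t. \<forall>x\<in>space M. 0 \<le> g y t x) \<and> (\<forall>y t. integrable M (g y t)) \<and>
     (\<Sum>y\<in>UNIV. \<Sum>t\<in>UNIV. \<integral>x. g y t x \<partial>M) = 1"

definition PrYstar :: "'x measure \<Rightarrow> (bool \<Rightarrow> bool \<Rightarrow> 'x \<Rightarrow> real) \<Rightarrow> bool \<Rightarrow> real" where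
  "PrYstar M g y = (\<integral>x. g y False x + g y True x \<partial>M)"

definition fXstar :: "(bool \<Rightarrow> bool \<Rightarrow> 'x \<Rightarrow> real) \<Rightarrow> 'x \<Rightarrow> real" where
  "fXstar g x = g False False x + g False True x + g True False x + g True True x"

definition fX_Ystar :: "'x measure \<Rightarrow> (bool \<Rightarrow> bool \<Rightarrow> 'x \<Rightarrow> real) \<Rightarrow> 'x \<Rightarrow> bool \<Rightarrow> real" where
  "fX_Ystar M g x y = (g y False x + g y True x) / PrYstar M g y"

definition PrT_XYstar :: "(bool \<Rightarrow> bool \<Rightarrow> 'x \<Rightarrow> real) \<Rightarrow> bool \<Rightarrow> 'x \<Rightarrow> bool \<Rightarrow> real" where
  "PrT_XYstar g t x y = g y t x / (g y False x + g y True x)"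

definition PrT_Xstar :: "(bool \<Rightarrow> bool \<Rightarrow> 'x \<Rightarrow> real) \<Rightarrow> bool \<Rightarrow> 'x \<Rightarrow> real" where
  "PrT_Xstar g t x = (g False t x + g True t x) / fXstar g x"

definition PrY1_TXstar :: "(bool \<Rightarrow> bool \<Rightarrow> 'x \<Rightarrow> real) \<Rightarrow> bool \<Rightarrow> 'x \<Rightarrow> real" where
  "PrY1_TXstar g t x = g True t x / (g False t x + g True t x)"

definition fX_Y :: "(bool \<Rightarrow> bool \<Rightarrow> 'x \<Rightarrow> real) \<Rightarrow> 'x \<Rightarrow> bool \<Rightarrow> real" where
  "fX_Y k x y = k y False x + k y True x"

definition Pi :: "(bool \<Rightarrow> bool \<Rightarrow> 'x \<Rightarrow> real) \<Rightarrow> bool \<Rightarrow> bool \<Rightarrow> 'x \<Rightarrow> real" where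
  "Pi k t y x = k y t x / fX_Y k x y"

definition PrY_X :: "real \<Rightarrow> (bool \<Rightarrow> bool \<Rightarrow> 'x \<Rightarrow> real) \<Rightarrow> bool \<Rightarrow> 'x \<Rightarrow> real" where
  "PrY_X h0 k y x = (if y then h0 else 1 - h0) * fX_Y k x y /
      (h0 * fX_Y k x True + (1 - h0) * fX_Y k x False)"

definition supp_Xstar :: "'x measure \<Rightarrow> (bool \<Rightarrow> bool \<Rightarrow> 'x \<Rightarrow> real) \<Rightarrow> 'x set" where
  "supp_Xstar M g = {x \<in> space M. 0 < fXstar g x}"

definition supp_X_Y :: "'x measure \<Rightarrow> (bool \<Rightarrow> bool \<Rightarrow> 'x \<Rightarrow> real) \<Rightarrow> bool \<Rightarrow> 'x set" where
  "supp_X_Y M k y = {x \<in> space M. 0 < fX_Y k x y}"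

definition design1 :: "'x measure \<Rightarrow> (bool \<Rightarrow> bool \<Rightarrow> 'x \<Rightarrow> real) \<Rightarrow> (bool \<Rightarrow> bool \<Rightarrow> 'x \<Rightarrow> real) \<Rightarrow> 'x set \<Rightarrow> bool" where
  "design1 M g k XX \<longleftrightarrow> (\<forall>t y. \<forall>x\<in>XX.
      fX_Y k x y = fX_Ystar M g x y \<and> Pi k t y x = PrT_XYstar g t x y)"

definition design2 :: "'x measure \<Rightarrow> (bool \<Rightarrow> bool \<Rightarrow> 'x \<Rightarrow> real) \<Rightarrow> (bool \<Rightarrow> bool \<Rightarrow> 'x \<Rightarrow> real) \<Rightarrow> 'x set \<Rightarrow> bool" where
  "design2 M g k XX \<longleftrightarrow> (\<forall>t. \<forall>x\<in>XX.
      fX_Y k x False = fXstar g x \<and> Pi k t False x = PrT_Xstar g t x \<and>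
      fX_Y k x True = fX_Ystar M g x True \<and> Pi k t True x = PrT_XYstar g t x True)"

definition holds_design :: "design \<Rightarrow> 'x measure \<Rightarrow> (bool \<Rightarrow> bool \<Rightarrow> 'x \<Rightarrow> real) \<Rightarrow> (bool \<Rightarrow> bool \<Rightarrow> 'x \<Rightarrow> real) \<Rightarrow> 'x set \<Rightarrow> bool" where
  "holds_design d M g k XX = (case d of CaseControl \<Rightarrow> design1 M g k XX | CasePopulation \<Rightarrow> design2 M g k XX)"

definition rfun :: "design \<Rightarrow> real \<Rightarrow> (bool \<Rightarrow> bool \<Rightarrow> 'x \<Rightarrow> real) \<Rightarrow> 'x \<Rightarrow> real \<Rightarrow> real" where
  "rfun d h0 k x p = (case d of
      CaseControl \<Rightarrow>
        p * (1 - h0) * PrY_X h0 k True x /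
        (p * (1 - h0) * PrY_X h0 k True x + h0 * (1 - p) * PrY_X h0 k False x)
    | CasePopulation \<Rightarrow>
        p * (1 - h0) / h0 * (PrY_X h0 k True x / PrY_X h0 k False x))"

end

theory Submission
  imports Defs
begin

lemma final_alg:
  fixes a0 a1 s0 s1 r :: real
  assumes "s0 > 0" "s1 > 0" "r = s1 / (s0 + s1)"
  shows "a1 / (a0 + a1) = r * (a1 / s1) / (a0 / s0 + r * (a1 / s1 - a0 / s0))"
proof -
  have S: "s0 + s1 > 0" using assms(1,2) by simp
  have e1: "r * (a1 / s1) = a1 / (s0 + s1)" unfolding assms(3) using assms(2) by simp
  have e2: "r * (a0 / s0) = a0 / s0 - a0 / (s0 + s1)"
    unfolding assms(3) using assms(1,2) S by (simp add: field_simps)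
  have "a0 / s0 + r * (a1 / s1 - a0 / s0) = a0 / s0 + r * (a1 / s1) - r * (a0 / s0)"
    by (simp add: algebra_simps)
  also have "\<dots> = (a0 + a1) / (s0 + s1)" unfolding e1 e2 by (simp add: add_divide_distrib)
  finally have e3: "a0 / s0 + r * (a1 / s1 - a0 / s0) = (a0 + a1) / (s0 + s1)" .
  show ?thesis unfolding e3 e1 using S by simp
qed

lemma canc: "(c::real) \<noteq> 0 \<Longrightarrow> c * s1 / (c * s1 + c * s0) = s1 / (s0 + s1)"
proof -
  assume c: "c \<noteq> 0"
  have "c * s1 + c * s0 = c * (s0 + s1)" by (simp add: algebra_simps)
  then show ?thesis using c by simp
qed

theorem lemmaA2:
  fixes M :: "'x measure"
    and g :: "bool \<Rightarrow> bool \<Rightarrow> 'x \<Rightarrow> real"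
    and k :: "bool \<Rightarrow> bool \<Rightarrow> 'x \<Rightarrow> real"
    and h0 :: real and d :: design and XX :: "'x set"
  assumes pop: "pop_density M g"
    and obs: "\<And>y. is_density M (k y)"
    and h0: "0 < h0" "h0 < 1"
    and p0_pos: "0 < PrYstar M g True"
    and p0_lt1: "d = CaseControl \<Longrightarrow> PrYstar M g True < 1"
    and supp1: "XX = supp_Xstar M g"
    and supp2: "\<And>y. XX = supp_X_Y M k y"
    and Pi_nz: "\<And>t y x. x \<in> XX \<Longrightarrow> Pi k t y x \<noteq> 0"
    and des: "holds_design d M g k XX"
    and x: "x \<in> XX"
  shows "PrY1_TXstar g t x =
     rfun d h0 k x (PrYstar M g True) * Pi k t True x /
     (Pi k t False x + rfun d h0 k x (if d = CaseControl then PrYstar M g True else 0) *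
        (Pi k t True x - Pi k t False x))"
proof -
  define p where "p = PrYstar M g True"
  define s0 where "s0 = g False False x + g False True x"
  define s1 where "s1 = g True False x + g True True x"
  define a0 where "a0 = g False t x"
  define a1 where "a1 = g True t x"
  have f0pos: "fX_Y k x False > 0" and f1pos: "fX_Y k x True > 0"
    using x supp2[of False] supp2[of True] by (auto simp: supp_X_Y_def)
  have Spos: "s0 + s1 > 0" using x supp1 by (auto simp: supp_Xstar_def fXstar_def s0_def s1_def)
  have lhs: "PrY1_TXstar g t x = a1 / (a0 + a1)" by (simp add: PrY1_TXstar_def a0_def a1_def add.commute)
  have ppos: "p > 0" using p0_pos p_def by simp
  show ?thesis
  proof (cases d)
    case CaseControl
    have sumP: "PrYstar M g False + PrYstar M g True = 1"
    proof -
      have int: "\<And>y t. integrable M (g y t)" using pop by (simp add: pop_density_def)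
      have "(\<Sum>y\<in>UNIV. \<Sum>t\<in>UNIV. \<integral>x. g y t x \<partial>M) = 1" using pop by (simp add: pop_density_def)
      then show ?thesis
        by (simp add: PrYstar_def UNIV_bool Bochner_Integration.integral_add[OF int int] add.commute)
    qed
    have q: "PrYstar M g False = 1 - p" using sumP p_def by simp
    have plt: "p < 1" using p0_lt1 CaseControl p_def by simp
    have d1: "design1 M g k XX" using des CaseControl by (simp add: holds_design_def)
    have F0: "fX_Y k x False = s0 / (1 - p)" and F1: "fX_Y k x True = s1 / p"
      using d1 x q by (auto simp: design1_def fX_Ystar_def s0_def s1_def p_def)
    have P0: "Pi k t False x = a0 / s0" and P1: "Pi k t True x = a1 / s1"
      using d1 x by (auto simp: design1_def PrT_XYstar_def s0_def s1_def a0_def a1_def)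
    have s0pos: "s0 > 0" using f0pos F0 plt
      by (metis diff_gt_0_iff_gt divide_pos_neg less_asym linorder_neqE_linordered_idom mult_eq_0_iff nonzero_mult_div_cancel_left zero_less_divide_iff)
    have s1pos: "s1 > 0" using f1pos F1 ppos by (simp add: zero_less_divide_iff)
    define D where "D = h0 * fX_Y k x True + (1 - h0) * fX_Y k x False"
    have Dpos: "D > 0" using h0 f0pos f1pos D_def by (simp add: add_pos_pos)
    have r: "rfun d h0 k x p = s1 / (s0 + s1)"
    proof -
      have "rfun d h0 k x p = p * (1 - h0) * (h0 * (s1/p) / D) /
          (p * (1 - h0) * (h0 * (s1/p) / D) + h0 * (1 - p) * ((1 - h0) * (s0/(1-p)) / D))"
        using CaseControl by (simp add: rfun_def PrY_X_def D_def F0 F1)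
      also have "\<dots> = ((1 - h0) * h0 / D) * s1 / (((1 - h0) * h0 / D) * s1 + ((1 - h0) * h0 / D) * s0)"
      proof -
        have e1: "p * (1 - h0) * (h0 * (s1/p) / D) = ((1 - h0) * h0 / D) * s1" using ppos Dpos by (simp add: field_simps)
        have e2: "h0 * (1 - p) * ((1 - h0) * (s0/(1-p)) / D) = ((1 - h0) * h0 / D) * s0" using plt Dpos by (simp add: field_simps)
        show ?thesis unfolding e1 e2 ..
      qed
      also have "\<dots> = s1 / (s0 + s1)"
      proof -
        have c: "(1 - h0) * h0 / D > 0" using h0 Dpos by simp
        have "((1 - h0) * h0 / D) * s1 + ((1 - h0) * h0 / D) * s0 = ((1 - h0) * h0 / D) * (s0 + s1)"
          by (simp only: distrib_left add.commute)
        show ?thesis by (rule canc) (use c in linarith)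
      qed
      finally show ?thesis .
    qed
    show ?thesis unfolding lhs P0 P1 using CaseControl r p_def
      by (simp add: final_alg[OF s0pos s1pos r])
  next
    case CasePopulation
    have d2: "design2 M g k XX" using des CasePopulation by (simp add: holds_design_def)
    have F0: "fX_Y k x False = s0 + s1" and F1: "fX_Y k x True = s1 / p"
      using d2 x by (auto simp: design2_def fX_Ystar_def fXstar_def s0_def s1_def p_def)
    have P0: "Pi k t False x = (a0 + a1) / (s0 + s1)" and P1: "Pi k t True x = a1 / s1"
      using d2 x by (auto simp: design2_def PrT_XYstar_def PrT_Xstar_def fXstar_def s0_def s1_def a0_def a1_def)
    have s1pos: "s1 > 0" using f1pos F1 ppos by (simp add: zero_less_divide_iff)
    define D where "D = h0 * fX_Y k x True + (1 - h0) * fX_Y k x False"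
    have Dpos: "D > 0" using h0 f0pos f1pos D_def by (simp add: add_pos_pos)
    have r: "rfun d h0 k x p = s1 / (s0 + s1)"
    proof -
      have "rfun d h0 k x p = p * (1 - h0) / h0 * ((h0 * (s1/p) / D) / ((1 - h0) * (s0 + s1) / D))"
        using CasePopulation by (simp add: rfun_def PrY_X_def D_def F0 F1)
      also have "\<dots> = p * (1 - h0) / h0 * ((h0 * (s1/p)) / ((1 - h0) * (s0 + s1)))"
        using Dpos by simp
      also have "\<dots> = (p * (1 - h0) * h0 * s1) / (h0 * p * (1 - h0) * (s0 + s1))"
        using ppos by (simp add: field_simps)
      also have "\<dots> = (p * (1 - h0) * h0) * s1 / ((p * (1 - h0) * h0) * (s0 + s1))"
        by (simp add: ac_simps)
      also have "\<dots> = s1 / (s0 + s1)"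
        using ppos h0 by (simp only: mult_divide_mult_cancel_left_if) simp
      finally show ?thesis .
    qed
    have r0: "rfun d h0 k x 0 = 0" using CasePopulation by (simp add: rfun_def)
    show ?thesis unfolding lhs P0 P1 using CasePopulation r r0 p_def s1pos Spos
      by (simp add: field_simps)
  qed
qed

end
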